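(* For every integer $m \geq 0$ and every real $\eta > -1$, $$ \pi = \frac{4^{m+1}}{\binom{2m}{m}(2m+1)}\cdot \frac{ {}_{3}F_{2}\!\!\left[ \begin{matrix} \tfrac{1}{2}-m,1,-\eta \\ \tfrac{3}{2}+m,2+\eta \end{matrix} \ \Bigg| \ -1 \right]}{ {}_{3}F_{2}\!\!\left[ \begin{matrix} \tfrac{1}{2}-m,\tfrac{1}{2},1+\eta \\ 1,2+\eta \end{matrix} \ \Bigg| \ 1 \right]}.$$
   Context: ${}_pF_q\left[\begin{matrix} a_1,\dots,a_p\\ b_1,\dots,b_q\end{matrix}\,\Big|\, z\right] = \sum_{n\ge 0} \frac{(a_1)_n\cdots(a_p)_n}{(b_1)_n\cdots(b_q)_n}\frac{z^n}{n!}$ with $(x)_n = \Gamma(x+n)/\Gamma(x)$. *)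

theory Defs
  imports Complex_Main
begin

definition hyperpFq :: "real list \<Rightarrow> real list \<Rightarrow> real \<Rightarrow> real" where
  "hyperpFq as bs z =
     (\<Sum>n. (prod_list (map (\<lambda>a. pochhammer a n) as)
             / prod_list (map (\<lambda>b. pochhammer b n) bs)) * z ^ n / fact n)"

end

theory Submission
  imports Defs "HOL-Analysis.Analysis" "HOL-Real_Asymp.Real_Asymp"
begin


lemma poch_tendsto:
  fixes z :: real
  shows "(\<lambda>n. pochhammer z n / (fact n * (real n + 1) powr (z - 1))) \<longlonglongrightarrow> rGamma z"
proof -
  have A: "(\<lambda>n. real n powr z / ((real n + 1) * (real n + 2) powr (z - 1))) \<longlonglongrightarrow> 1"
    by real_asymp
  have B: "rGamma_series z \<longlonglongrightarrow> rGamma z" by (rule rGamma_series_LIMSEQ)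
  have C: "(\<lambda>n. rGamma_series z n * (real n powr z / ((real n + 1) * (real n + 2) powr (z - 1)))) \<longlonglongrightarrow> rGamma z * 1"
    by (intro tendsto_mult B A)
  have D: "eventually (\<lambda>n. rGamma_series z n * (real n powr z / ((real n + 1) * (real n + 2) powr (z - 1))) = pochhammer z (Suc n) / (fact (Suc n) * (real (Suc n) + 1) powr (z - 1))) sequentially"
    using eventually_gt_at_top[of "0::nat"]
  proof eventually_elim
    case (elim n)
    then have e: "exp (z * ln (real n)) = real n powr z" by (simp add: powr_def)
    have p: "real n powr z > 0" using elim by simp
    have "real (Suc n) + 1 = real n + 2" by simp
    then show ?case using p by (simp add: rGamma_series_def e field_simps)
  qed
  have "(\<lambda>n. pochhammer z (Suc n) / (fact (Suc n) * (real (Suc n) + 1) powr (z - 1))) \<longlonglongrightarrow> rGamma z"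
    using Lim_transform_eventually[OF C D] by simp
  then show ?thesis by (rule LIMSEQ_imp_Suc)
qed

lemma poch_bound:
  fixes z :: real
  obtains C where "C \<ge> 0" "\<And>n. \<bar>pochhammer z n\<bar> \<le> C * (fact n * (real n + 1) powr (z - 1))"
proof -
  have "Bseq (\<lambda>n. pochhammer z n / (fact n * (real n + 1) powr (z - 1)))"
    using poch_tendsto[of z] by (intro convergent_imp_Bseq convergentI)
  then obtain K where K: "K > 0" "\<And>n. norm (pochhammer z n / (fact n * (real n + 1) powr (z - 1))) \<le> K"
    by (auto elim!: BseqE)
  have "\<bar>pochhammer z n\<bar> \<le> K * (fact n * (real n + 1) powr (z - 1))" for n
  proof -
    have pos: "fact n * (real n + 1) powr (z - 1) > 0" by simp
    have "\<bar>pochhammer z n\<bar> / (fact n * (real n + 1) powr (z - 1)) \<le> K"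
      using K(2)[of n] pos by (simp add: abs_divide)
    then show ?thesis using pos by (simp add: divide_le_eq)
  qed
  then show ?thesis using that K(1) by (meson less_imp_le)
qed

lemma poch_inv_bound:
  fixes z :: real
  assumes "z > 0"
  obtains C where "C \<ge> 0" "\<And>n. 1 / pochhammer z n \<le> C / (fact n * (real n + 1) powr (z - 1))"
proof -
  have rg: "rGamma z \<noteq> 0" using assms by (auto simp: rGamma_eq_zero_iff dest: nonpos_Ints_nonpos)
  have "(\<lambda>n. inverse (pochhammer z n / (fact n * (real n + 1) powr (z - 1)))) \<longlonglongrightarrow> inverse (rGamma z)"
    using poch_tendsto[of z] rg by (intro tendsto_inverse) auto
  then have "Bseq (\<lambda>n. inverse (pochhammer z n / (fact n * (real n + 1) powr (z - 1))))"
    by (intro convergent_imp_Bseq convergentI)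
  then obtain K where K: "K > 0" "\<And>n. norm (inverse (pochhammer z n / (fact n * (real n + 1) powr (z - 1)))) \<le> K"
    by (auto elim!: BseqE)
  have "1 / pochhammer z n \<le> K / (fact n * (real n + 1) powr (z - 1))" for n
  proof -
    have pos: "fact n * (real n + 1) powr (z - 1) > 0" by simp
    have pp: "pochhammer z n > 0" using assms by (rule pochhammer_pos)
    have "(fact n * (real n + 1) powr (z - 1)) / pochhammer z n \<le> K"
      using K(2)[of n] pos pp by (simp add: abs_divide)
    then show ?thesis using pos pp by (simp add: field_simps)
  qed
  then show ?thesis using that K(1) by (meson less_imp_le)
qed

definition ca :: "nat \<Rightarrow> nat \<Rightarrow> real" where
  "ca m j = pochhammer (1/2 - real m) j * pochhammer (1/2) j / (fact j)^2"

definition ph :: "real \<Rightarrow> nat \<Rightarrow> real" where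
  "ph x n = pochhammer (-x) n / pochhammer (1+x) (Suc n)"

definition RR :: "nat \<Rightarrow> nat \<Rightarrow> real" where
  "RR j n = (\<Prod>i<n. (real j - real i) / (real j + 1 + real i))"

definition WW :: "nat \<Rightarrow> nat \<Rightarrow> real" where
  "WW j n = (2 * real n + 1) * RR j n / (real j + real n + 1)"

definition uu :: "nat \<Rightarrow> nat \<Rightarrow> real" where
  "uu m n = pochhammer (1/2 - real m) n / pochhammer (3/2 + real m) n"

lemma ca_bound:
  obtains C where "\<And>j. \<bar>ca m j\<bar> \<le> C * (real j + 1) powr (- real m - 1)"
proof -
  obtain C1 where C1nn: "C1 \<ge> 0" and C1: "\<And>n. \<bar>pochhammer (1/2 - real m) n\<bar> \<le> C1 * (fact n * (real n + 1) powr ((1/2 - real m) - 1))"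
    by (rule poch_bound[of "1/2 - real m"]) blast
  obtain C2 where C2nn: "C2 \<ge> 0" and C2: "\<And>n. \<bar>pochhammer (1/2) n\<bar> \<le> C2 * (fact n * (real n + 1) powr (1/2 - 1))"
    by (rule poch_bound[of "1/2"]) blast
  have "\<bar>ca m j\<bar> \<le> (C1 * C2) * (real j + 1) powr (- real m - 1)" for j
  proof -
    have f: "fact j > (0::real)" by simp
    have "\<bar>ca m j\<bar> = \<bar>pochhammer (1/2 - real m) j\<bar> * \<bar>pochhammer (1/2) j\<bar> / (fact j)^2"
      by (simp add: ca_def abs_mult)
    also have "\<dots> \<le> (C1 * (fact j * (real j + 1) powr ((1/2 - real m) - 1))) * (C2 * (fact j * (real j + 1) powr (1/2 - 1))) / (fact j)^2"
      using C1nn by (intro divide_right_mono mult_mono C1 C2) auto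
    also have "\<dots> = (C1 * C2) * ((real j + 1) powr ((1/2 - real m) - 1) * (real j + 1) powr (1/2 - 1))"
      using f by (simp add: power2_eq_square field_simps)
    also have "(real j + 1) powr ((1/2 - real m) - 1) * (real j + 1) powr (1/2 - 1) = (real j + 1) powr (- real m - 1)"
      by (simp add: powr_add[symmetric] algebra_simps)
    finally show ?thesis .
  qed
  then show ?thesis using that by blast
qed

lemma ph_bound:
  assumes x: "x > -1"
  obtains C where "\<And>n. \<bar>ph x n\<bar> \<le> C * (real n + 1) powr (- 2 * (x + 1))"
proof -
  obtain C1 where C1nn: "C1 \<ge> 0" and C1: "\<And>n. \<bar>pochhammer (-x) n\<bar> \<le> C1 * (fact n * (real n + 1) powr (-x - 1))"
    by (rule poch_bound[of "-x"]) blast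
  obtain C2 where C2nn: "C2 \<ge> 0" and C2: "\<And>n. 1 / pochhammer (1+x) n \<le> C2 / (fact n * (real n + 1) powr ((1+x) - 1))"
    using poch_inv_bound[of "1+x"] x by auto
  define mu where "mu = min 1 (1+x)"
  have mu: "mu > 0" using x by (simp add: mu_def)
  have "\<bar>ph x n\<bar> \<le> (C1 * C2 / mu) * (real n + 1) powr (- 2 * (x + 1))" for n
  proof -
    have f: "fact n > (0::real)" by simp
    have pp: "pochhammer (1+x) n > 0" using x by (intro pochhammer_pos) auto
    have lin: "1 + x + real n \<ge> mu * (real n + 1)"
    proof (cases "x \<ge> 0")
      case True then show ?thesis by (simp add: mu_def)
    next
      case False
      then have "mu = 1 + x" by (simp add: mu_def)
      then show ?thesis using False x by (simp add: algebra_simps mult_nonpos_nonneg)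
    qed
    have lpos: "1 + x + real n > 0" using x by simp
    have "\<bar>ph x n\<bar> = \<bar>pochhammer (-x) n\<bar> * (1 / pochhammer (1+x) n) * (1 / (1 + x + real n))"
      using pp lpos by (simp add: ph_def pochhammer_Suc abs_mult abs_divide)
    also have "\<dots> \<le> (C1 * (fact n * (real n + 1) powr (-x - 1))) * (C2 / (fact n * (real n + 1) powr ((1+x) - 1))) * (1 / (mu * (real n + 1)))"
    proof (intro mult_mono C1 C2)
      show "1 / (1 + x + real n) \<le> 1 / (mu * (real n + 1))"
        using lin mu lpos by (intro divide_left_mono) auto
    qed (use C1nn C2nn pp lpos in auto)
    also have "\<dots> = (C1 * C2 / mu) * ((real n + 1) powr (-x - 1) / (real n + 1) powr x / (real n + 1))"
      using f mu by (simp add: field_simps)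
    also have "(real n + 1) powr (-x - 1) / (real n + 1) powr x / (real n + 1) = (real n + 1) powr (- 2 * (x + 1))"
    proof -
      have y: "real n + 1 > 0" by simp
      have "(real n + 1) powr (-x - 1) / (real n + 1) powr x / (real n + 1) = (real n + 1) powr (-x - 1) / (real n + 1) powr x / (real n + 1) powr 1"
        using y by simp
      also have "\<dots> = (real n + 1) powr ((-x - 1) - x - 1)"
        by (simp only: powr_diff)
      also have "(-x - 1) - x - 1 = - 2 * (x + 1)" by simp
      finally show ?thesis .
    qed
    finally show ?thesis .
  qed
  then show ?thesis using that by blast
qed

lemma RR_zero: "n > j \<Longrightarrow> RR j n = 0"
  unfolding RR_def by (intro prod_zero) (auto intro!: bexI[of _ j])

lemma RR_0 [simp]: "RR j 0 = 1"
  by (simp add: RR_def)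

lemma RR_Suc: "RR j (Suc n) = RR j n * ((real j - real n) / (real j + 1 + real n))"
  by (simp add: RR_def)

lemma RR_nonneg: "RR j n \<ge> 0"
proof (cases "n \<le> j")
  case True
  then show ?thesis unfolding RR_def by (intro prod_nonneg) auto
qed (simp add: RR_zero)

lemma RR_le1: "RR j n \<le> 1"
proof (cases "n \<le> j")
  case True
  then show ?thesis unfolding RR_def by (intro prod_le_1) auto
qed (simp add: RR_zero)

lemma sum_odd_sq: "(\<Sum>i<n. 2 * real i + 1) = real n ^ 2"
  by (induction n) (auto simp: power2_eq_square algebra_simps)

lemma RR_exp:
  assumes "n \<le> j" "0 < n"
  shows "RR j n \<le> exp (- ((real n)^2) / (real j + real n))"
proof -
  have jn: "real j + real n > 0" using assms by simp
  have "RR j n \<le> (\<Prod>i<n. exp (- ((2 * real i + 1) / (real j + real n))))"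
    unfolding RR_def
  proof (intro prod_mono conjI)
    fix i assume i: "i \<in> {..<n}"
    show "0 \<le> (real j - real i) / (real j + 1 + real i)" using i assms by auto
    have "(real j - real i) / (real j + 1 + real i) = 1 - (2 * real i + 1) / (real j + 1 + real i)"
      by (simp add: field_simps)
    also have "\<dots> \<le> 1 - (2 * real i + 1) / (real j + real n)"
      using i jn by (intro diff_left_mono divide_left_mono) auto
    also have "\<dots> \<le> exp (- ((2 * real i + 1) / (real j + real n)))"
      using exp_ge_add_one_self[of "- ((2 * real i + 1) / (real j + real n))"] by simp
    finally show "(real j - real i) / (real j + 1 + real i) \<le> exp (- ((2 * real i + 1) / (real j + real n)))" .
  qed
  also have "\<dots> = exp (\<Sum>i<n. - ((2 * real i + 1) / (real j + real n)))"
    by (simp add: exp_sum)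
  also have "(\<Sum>i<n. - ((2 * real i + 1) / (real j + real n))) = - ((\<Sum>i<n. 2 * real i + 1) / (real j + real n))"
    by (simp add: sum_divide_distrib sum_negf)
  also have "\<dots> = - ((real n)^2) / (real j + real n)" by (simp only: sum_odd_sq minus_divide_left)
  finally show ?thesis .
qed

lemma RR_powr:
  assumes th: "0 < th" "th \<le> 1"
  shows "RR j n \<le> (8 * (real j + 1) / (real n + 1)^2) powr th"
proof (cases "n \<le> j")
  case False
  then show ?thesis by (simp add: RR_zero)
next
  case True
  define B where "B = 8 * (real j + 1) / (real n + 1)^2"
  have Bpos: "B > 0" by (simp add: B_def)
  show ?thesis
  proof (cases "B \<ge> 1")
    case True
    then have "1 \<le> B powr th" using th by (intro ge_one_powr_ge_zero) auto
    then show ?thesis using RR_le1[of j n] by (simp add: B_def)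
  next
    case False
    then have n0: "n > 0" by (cases n) (auto simp: B_def)
    define y where "y = (real n)^2 / (real j + real n)"
    have y: "y \<ge> 0" by (simp add: y_def)
    have "RR j n \<le> exp (- y)" using RR_exp[OF True n0] by (simp add: y_def)
    also have "exp (- y) \<le> 1 / (1 + y)"
      using exp_ge_add_one_self[of y] y by (simp add: exp_minus field_simps)
    also have "1 / (1 + y) \<le> B"
    proof -
      have jn: "real j + real n > 0" using n0 by simp
      have "1 / (1 + y) = (real j + real n) / (real j + real n + (real n)^2)"
        using jn by (simp add: y_def field_simps)
      also have "\<dots> \<le> B"
      proof -
        have "(real j + real n) * (real n + 1)^2 \<le> 8 * (real j + 1) * (real j + real n + (real n)^2)"
        proof -
          have a: "real j + real n \<le> 2 * (real j + 1)" using True by simp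
          have b: "(real n + 1)^2 \<le> 4 * (real j + real n + (real n)^2)"
          proof -
            have "real n \<ge> 1" using n0 by simp
            then have nn: "real n * real n \<ge> real n" using mult_left_mono[of 1 "real n" "real n"] by simp
            have e1: "(real n + 1)^2 = real n * real n + 2 * real n + 1" by (simp add: power2_eq_square algebra_simps)
            have e2: "4 * (real n)^2 = 4 * (real n * real n)" by (simp add: power2_eq_square)
            have "(real n + 1)^2 \<le> 4 * (real n)^2" unfolding e1 e2 using nn \<open>real n \<ge> 1\<close> by linarith
            then show ?thesis by simp
          qed
          have "(real j + real n) * (real n + 1)^2 \<le> (2 * (real j + 1)) * (4 * (real j + real n + (real n)^2))"
            using a b by (intro mult_mono) auto
          also have "\<dots> = 8 * (real j + 1) * (real j + real n + (real n)^2)" by (simp only: mult_ac)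
          finally show ?thesis .
        qed
        then have ineq: "(real j + real n) * (real n + 1)^2 \<le> 8 * (real j + 1) * (real j + real n + (real n)^2)" .
        have D1: "real j + real n + (real n)^2 > 0" using jn by (simp add: add_pos_nonneg)
        have d: "(real j + real n + (real n)^2) * (real n + 1)^2 > 0" using D1 by simp
        have "(real j + real n) / (real j + real n + (real n)^2) = ((real j + real n) * (real n + 1)^2) / ((real j + real n + (real n)^2) * (real n + 1)^2)"
          using D1 by simp
        also have "\<dots> \<le> (8 * (real j + 1) * (real j + real n + (real n)^2)) / ((real j + real n + (real n)^2) * (real n + 1)^2)"
          using ineq d by (intro divide_right_mono) auto
        also have "\<dots> = B" using D1 by (simp add: B_def)
        finally show ?thesis .
      qed
      finally show ?thesis .
    qed
    also have "B \<le> B powr th"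
    proof -
      have "B powr 1 \<le> B powr th" using th False Bpos by (intro powr_mono') auto
      then show ?thesis using Bpos by simp
    qed
    finally show ?thesis by (simp add: B_def)
  qed
qed

lemma key_frac:
  fixes x :: real and j k :: nat
  assumes l1: "x + real j + 1 \<noteq> 0" and l2: "1 + x + real k \<noteq> 0" and l3: "real j + real k + 1 \<noteq> 0"
  shows "1 / (x + real j + 1) - (2 * real k + 1) / ((real j + real k + 1) * (1 + x + real k))
          = - ((real j - real k) * (real k - x)) / ((real j + 1 + real k) * (1 + x + real k) * (x + real j + 1))"
proof -
  have l3': "real j + 1 + real k \<noteq> 0" using l3 by (simp add: add_ac)
  have e: "(real j + real k + 1) * (1 + x + real k) - (2 * real k + 1) * (x + real j + 1) = - ((real j - real k) * (real k - x))"
    by (simp add: algebra_simps)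
  have "1 / (x + real j + 1) - (2 * real k + 1) / ((real j + real k + 1) * (1 + x + real k))
     = ((real j + real k + 1) * (1 + x + real k) - (2 * real k + 1) * (x + real j + 1)) / ((real j + real k + 1) * (1 + x + real k) * (x + real j + 1))"
    using l1 l2 l3 by (simp add: diff_frac_eq mult_ac)
  also have "\<dots> = - ((real j - real k) * (real k - x)) / ((real j + 1 + real k) * (1 + x + real k) * (x + real j + 1))"
    using e by (simp add: add_ac)
  finally show ?thesis .
qed

lemma finite_id_gen:
  assumes x: "x > -1"
  shows "1 / (x + real j + 1) - (\<Sum>n<k. (-1)^n * WW j n * ph x n)
         = (-1)^k * RR j k * pochhammer (-x) k / (pochhammer (1+x) k * (x + real j + 1))"
proof (induction k)
  case 0
  then show ?case by simp
next
  case (Suc k)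
  have pp: "pochhammer (1+x) k > 0" using x by (intro pochhammer_pos) auto
  have l1: "x + real j + 1 > 0" using x by simp
  have l2: "1 + x + real k > 0" using x by simp
  have l3: "real j + real k + 1 > 0" by simp
  have "1 / (x + real j + 1) - (\<Sum>n<Suc k. (-1)^n * WW j n * ph x n)
        = (-1)^k * RR j k * pochhammer (-x) k / (pochhammer (1+x) k * (x + real j + 1)) - (-1)^k * WW j k * ph x k"
    using Suc.IH by simp
  also have "\<dots> = (-1)^Suc k * RR j (Suc k) * pochhammer (-x) (Suc k) / (pochhammer (1+x) (Suc k) * (x + real j + 1))"
  proof -
    have key: "1 / (x + real j + 1) - (2 * real k + 1) / ((real j + real k + 1) * (1 + x + real k))
          = - ((real j - real k) * (real k - x)) / ((real j + 1 + real k) * (1 + x + real k) * (x + real j + 1))"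
      using l1 l2 l3 by (intro key_frac) auto
    define P where "P = (-1)^k * RR j k * pochhammer (-x) k / pochhammer (1+x) k"
    have ne1: "pochhammer (1+x) k \<noteq> 0" using pp by simp
    have ne2: "1 + x + real k \<noteq> 0" using l2 by simp
    have ne3: "real j + real k + 1 \<noteq> 0" using l3 by simp
    have ne4: "x + real j + 1 \<noteq> 0" using l1 by simp
    have ne5: "real j + 1 + real k \<noteq> 0" using l3 by simp
    have E1: "(-1)^k * RR j k * pochhammer (-x) k / (pochhammer (1+x) k * (x + real j + 1)) = P * (1 / (x + real j + 1))"
      by (simp add: P_def)
    have E2: "(-1)^k * WW j k * ph x k = P * ((2 * real k + 1) / ((real j + real k + 1) * (1 + x + real k)))"
      unfolding P_def WW_def ph_def pochhammer_Suc using ne1 ne2 ne3 by (simp add: field_simps)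
    have E3: "(-1)^Suc k * RR j (Suc k) * pochhammer (-x) (Suc k) / (pochhammer (1+x) (Suc k) * (x + real j + 1))
       = P * (- ((real j - real k) * (real k - x)) / ((real j + 1 + real k) * (1 + x + real k) * (x + real j + 1)))"
      unfolding P_def RR_Suc pochhammer_Suc using ne1 ne2 ne4 ne5 by (simp add: field_simps)
    show ?thesis unfolding E1 E2 E3 key[symmetric] by (simp add: right_diff_distrib)
  qed
  finally show ?case .
qed

lemma finite_id:
  assumes x: "x > -1"
  shows "(\<Sum>n<Suc j. (-1)^n * WW j n * ph x n) = 1 / (x + real j + 1)"
  using finite_id_gen[OF x, of j "Suc j"] by (simp add: RR_zero)

lemma ca_Suc: "ca m (Suc j) = ca m j * ((real j + 1/2 - real m) * (real j + 1/2)) / ((real j + 1) * (real j + 1))"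
  by (simp add: ca_def pochhammer_Suc field_simps power2_eq_square)

lemma poch_step: "pochhammer (b::real) j * (b + real j) = b * pochhammer (b + 1) j"
  using pochhammer_rec[of b j] pochhammer_Suc[of b j] by simp

lemma ca_m_Suc: "ca (Suc m) j * (real j - 1/2 - real m) = (- 1/2 - real m) * ca m j"
proof -
  define b where "b = - 1/2 - real m"
  have e1: "1/2 - real (Suc m) = b" by (simp add: b_def)
  have e2: "1/2 - real m = b + 1" by (simp add: b_def)
  have e3: "real j - 1/2 - real m = b + real j" by (simp add: b_def)
  have "ca (Suc m) j * (b + real j) = (pochhammer b j * (b + real j)) * pochhammer (1/2) j / (fact j)^2"
    unfolding ca_def e1 by simp
  also have "\<dots> = (b * pochhammer (b+1) j) * pochhammer (1/2) j / (fact j)^2" by (simp only: poch_step)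
  also have "\<dots> = b * ca m j" unfolding ca_def e2 by simp
  finally show ?thesis unfolding e3 b_def .
qed

lemma ca_0_pos: "ca 0 j > 0"
  by (simp add: ca_def pochhammer_pos)

lemma V0_base: "(\<lambda>j. ca 0 j / (real j + 1)) sums (4 / pi)"
proof -
  have ps: "(\<Sum>j<J. ca 0 j / (real j + 1)) = 4 * real J * ca 0 J" for J
  proof (induction J)
    case 0 then show ?case by simp
  next
    case (Suc J)
    have "4 * real (Suc J) * ca 0 (Suc J) - 4 * real J * ca 0 J = ca 0 J / (real J + 1)"
    proof -
      have ne: "real J + 1 \<noteq> 0" by simp
      have "4 * real (Suc J) * ca 0 (Suc J) = 4 * ca 0 J * ((real J + 1/2) * (real J + 1/2)) / (real J + 1)"
      proof -
        define t where "t = real J + 1"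
        have t: "t \<noteq> 0" by (simp add: t_def)
        have "4 * real (Suc J) * ca 0 (Suc J) = 4 * t * (ca 0 J * ((real J + 1/2) * (real J + 1/2)) / (t * t))"
          by (simp add: ca_Suc t_def)
        also have "\<dots> = 4 * ca 0 J * ((real J + 1/2) * (real J + 1/2)) / t" using t by (simp add: field_simps)
        finally show ?thesis by (simp add: t_def)
      qed
      also have "\<dots> - 4 * real J * ca 0 J = ca 0 J * (4 * ((real J + 1/2) * (real J + 1/2)) - 4 * real J * (real J + 1)) / (real J + 1)"
        using ne by (simp add: field_simps)
      also have "4 * ((real J + 1/2) * (real J + 1/2)) - 4 * real J * (real J + 1) = 1"
        by (simp add: algebra_simps)
      finally show ?thesis by simp
    qed
    then show ?case using Suc.IH by simp
  qed
  have lim1: "(\<lambda>J. pochhammer (1/2::real) J / (fact J * (real J + 1) powr (1/2 - 1))) \<longlonglongrightarrow> rGamma (1/2)"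
    by (rule poch_tendsto)
  have rg: "rGamma (1/2::real) = 1 / sqrt pi"
    by (metis rGamma_inverse_Gamma Gamma_one_half_real inverse_eq_divide)
  have lim2: "(\<lambda>J. (pochhammer (1/2::real) J / (fact J * (real J + 1) powr (1/2 - 1)))^2 * (4 * (real J / (real J + 1)))) \<longlonglongrightarrow> (1 / sqrt pi)^2 * (4 * 1)"
  proof -
    have l: "(\<lambda>J. pochhammer (1/2::real) J / (fact J * (real J + 1) powr (1/2 - 1))) \<longlonglongrightarrow> 1 / sqrt pi"
      using lim1 rg by simp
    have l2: "(\<lambda>J. real J / (real J + 1)) \<longlonglongrightarrow> 1" by real_asymp
    show ?thesis by (intro tendsto_mult tendsto_power l tendsto_const l2)
  qed
  have eq: "(pochhammer (1/2::real) J / (fact J * (real J + 1) powr (1/2 - 1)))^2 * (4 * (real J / (real J + 1))) = 4 * real J * ca 0 J" for J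
  proof -
    define y where "y = real J + 1"
    have y: "y > 0" by (simp add: y_def)
    define s where "s = y powr (1/2 - 1)"
    have spos: "s > 0" using y by (simp add: s_def)
    have "s^2 = y powr (1/2 - 1) * y powr (1/2 - 1)" by (simp add: s_def power2_eq_square)
    also have "\<dots> = y powr ((1/2 - 1) + (1/2 - 1))" by (simp only: powr_add)
    also have "(1/2 - 1) + (1/2 - 1) = - (1::real)" by simp
    also have "y powr - 1 = 1 / y" using y by (simp add: powr_minus_divide)
    finally have s2: "s^2 = 1 / y" .
    have c0: "ca 0 J = pochhammer (1/2) J * pochhammer (1/2) J / (fact J * fact J)"
      by (simp add: ca_def power2_eq_square)
    have "(pochhammer (1/2::real) J / (fact J * s))^2 * (4 * (real J / y)) = pochhammer (1/2) J * pochhammer (1/2) J / (fact J * fact J) * (4 * real J) * (1 / (s^2 * y))"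
      by (simp add: power2_eq_square)
    also have "1 / (s^2 * y) = 1" using s2 y by simp
    finally show ?thesis unfolding c0 s_def y_def by simp
  qed
  have "(\<lambda>J. 4 * real J * ca 0 J) \<longlonglongrightarrow> (1 / sqrt pi)^2 * (4 * 1)"
    using lim2 unfolding eq .
  moreover have "(1 / sqrt pi)^2 * (4 * 1) = 4 / pi" by (simp add: power_divide)
  ultimately have "(\<lambda>J. 4 * real J * ca 0 J) \<longlonglongrightarrow> 4 / pi" by simp
  then show ?thesis unfolding sums_def ps .
qed



lemma powr_le_inv_sq:
  fixes e :: real
  assumes "e \<le> -2"
  shows "(real j + 1) powr e \<le> 1 / (real j + 1)^2"
proof -
  have "(real j + 1) powr e \<le> (real j + 1) powr (-2)"
    using assms by (intro powr_mono) auto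
  also have "(real j + 1) powr (-2) = 1 / (real j + 1)^2"
    by (simp add: powr_minus_divide powr_numeral)
  finally show ?thesis .
qed

lemma powr_le_inv:
  fixes e :: real
  assumes "e \<le> -1"
  shows "(real j + 1) powr e \<le> 1 / (real j + 1)"
proof -
  have "(real j + 1) powr e \<le> (real j + 1) powr (-1)"
    using assms by (intro powr_mono) auto
  also have "(real j + 1) powr (-1) = 1 / (real j + 1)"
    by (simp add: powr_minus_divide)
  finally show ?thesis .
qed

lemma inv_Suc_tendsto: "(\<lambda>j. K / (real j + 1)) \<longlonglongrightarrow> 0"
  by real_asymp

lemma tele_alg1:
  fixes cS c0 cS1 J p :: real
  assumes J: "J \<ge> 0" and p: "p > 0"
    and h1: "cS * (J - p) = (- p) * c0"
    and h2: "cS1 * ((J + 1) * (J + 1)) = cS * ((J - p) * (J + 1/2))"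
  shows "cS / (J + 1) - ((p + 1/2) / (p + 1)) * (c0 / (J + 1))
       = (- 1 / (p * (p + 1))) * (J + 1) * cS1 - (- 1 / (p * (p + 1))) * J * cS"
proof -
  have a: "inverse (J + 1) * (J + 1) = 1" "inverse (p + 1) * (p + 1) = 1" "inverse p * p = 1" using J p by auto
  show ?thesis unfolding divide_inverse inverse_mult_distrib
    using a h1 h2 by algebra
qed

lemma V0_step:
  assumes V: "(\<lambda>j. ca m j / (real j + 1)) sums V"
  shows "(\<lambda>j. ca (Suc m) j / (real j + 1)) sums ((real m + 1) / (real m + 3/2) * V)"
proof -
  define p where "p = real m + 1/2"
  have p: "p > 0" by (simp add: p_def)
  define lam where "lam = - 1 / (p * (p + 1))"
  define rho where "rho = (p + 1/2) / (p + 1)"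
  define H where "H j = lam * real j * ca (Suc m) j" for j
  have tele: "ca (Suc m) j / (real j + 1) - rho * (ca m j / (real j + 1)) = H (Suc j) - H j" for j
  proof -
    have J: "real j \<ge> 0" by simp
    have h1: "ca (Suc m) j * (real j - p) = (- p) * ca m j"
      using ca_m_Suc[of m j] by (simp add: p_def algebra_simps)
    have h2: "ca (Suc m) (Suc j) * ((real j + 1) * (real j + 1)) = ca (Suc m) j * ((real j - p) * (real j + 1/2))"
    proof -
      have e: "real j + 1/2 - real (Suc m) = real j - p" by (simp add: p_def)
      have ne: "(real j + 1) * (real j + 1) \<noteq> 0" by simp
      show ?thesis unfolding ca_Suc[of "Suc m" j] e using ne by simp
    qed
    show ?thesis using tele_alg1[OF J p h1 h2] by (simp add: H_def lam_def rho_def)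
  qed
  obtain C where C: "\<And>j. \<bar>ca (Suc m) j\<bar> \<le> C * (real j + 1) powr (- real (Suc m) - 1)"
    by (rule ca_bound[of "Suc m"]) blast
  have Hlim: "H \<longlonglongrightarrow> 0"
  proof (rule Lim_null_comparison)
    show "(\<lambda>j. \<bar>lam\<bar> * \<bar>C\<bar> / (real j + 1)) \<longlonglongrightarrow> 0" by (rule inv_Suc_tendsto)
    show "\<forall>\<^sub>F j in sequentially. norm (H j) \<le> \<bar>lam\<bar> * \<bar>C\<bar> / (real j + 1)"
    proof (intro always_eventually allI)
      fix j
      have "\<bar>ca (Suc m) j\<bar> \<le> \<bar>C\<bar> * (1 / (real j + 1)^2)"
      proof -
        have "\<bar>ca (Suc m) j\<bar> \<le> C * (real j + 1) powr (- real (Suc m) - 1)" by (rule C)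
        also have "\<dots> \<le> \<bar>C\<bar> * (real j + 1) powr (- real (Suc m) - 1)" by (intro mult_right_mono) auto
        also have "\<dots> \<le> \<bar>C\<bar> * (1 / (real j + 1)^2)" by (intro mult_left_mono powr_le_inv_sq) auto
        finally show ?thesis .
      qed
      then have "\<bar>lam\<bar> * real j * \<bar>ca (Suc m) j\<bar> \<le> \<bar>lam\<bar> * real j * (\<bar>C\<bar> * (1 / (real j + 1)^2))"
        by (intro mult_left_mono) auto
      also have "\<dots> \<le> \<bar>lam\<bar> * \<bar>C\<bar> / (real j + 1)"
      proof -
        have "real j * (1 / (real j + 1)^2) = (real j / (real j + 1)) * (1 / (real j + 1))"
          by (simp add: power2_eq_square)
        also have "\<dots> \<le> 1 * (1 / (real j + 1))"
          by (intro mult_right_mono) auto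
        finally have "real j * (1 / (real j + 1)^2) \<le> 1 / (real j + 1)" by simp
        then show ?thesis using mult_left_mono[of "real j * (1 / (real j + 1)^2)" "1 / (real j + 1)" "\<bar>lam\<bar> * \<bar>C\<bar>"]
          by (simp add: mult_ac)
      qed
      finally show "norm (H j) \<le> \<bar>lam\<bar> * \<bar>C\<bar> / (real j + 1)"
        by (simp add: H_def abs_mult)
    qed
  qed
  have "(\<lambda>j. H (Suc j) - H j) sums (0 - H 0)" by (rule telescope_sums[OF Hlim])
  moreover have "(\<lambda>j. H (Suc j) - H j) = (\<lambda>j. ca (Suc m) j / (real j + 1) - rho * (ca m j / (real j + 1)))"
    using tele by simp
  moreover have "H 0 = 0" by (simp add: H_def)
  ultimately have s1: "(\<lambda>j. ca (Suc m) j / (real j + 1) - rho * (ca m j / (real j + 1))) sums 0"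
    by simp
  have s2: "(\<lambda>j. rho * (ca m j / (real j + 1))) sums (rho * V)" by (rule sums_mult[OF V])
  have "(\<lambda>j. (ca (Suc m) j / (real j + 1) - rho * (ca m j / (real j + 1))) + rho * (ca m j / (real j + 1))) sums (0 + rho * V)"
    by (rule sums_add[OF s1 s2])
  moreover have "rho = (real m + 1) / (real m + 3/2)" by (simp add: rho_def p_def add_ac)
  ultimately show ?thesis by simp
qed

definition V0v :: "nat \<Rightarrow> real" where
  "V0v m = 4^(m+1) / (pi * real (2*m choose m) * (2 * real m + 1))"

lemma central_binom_Suc:
  "(real m + 1) * real (2 * Suc m choose Suc m) = 2 * (2 * real m + 1) * real (2*m choose m)"
proof -
  define X where "X = (2 * Suc m choose Suc m)"
  define Z where "Z = (Suc (2*m) choose Suc m)"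
  define C where "C = (2*m choose m)"
  have t: "2 * Suc m = Suc (Suc (2*m))" by simp
  have e1: "Suc m * X = Suc (Suc (2*m)) * (Suc (2*m) choose m)"
    unfolding X_def t by (rule Suc_times_binomial)
  have e2: "Suc m * Z = Suc (2*m) * C"
    unfolding Z_def C_def by (rule Suc_times_binomial)
  have e3: "(Suc (2*m) choose m) = Z"
  proof -
    have "(Suc (2*m) choose m) = (Suc (2*m) choose (Suc (2*m) - m))" by (rule binomial_symmetric) simp
    also have "Suc (2*m) - m = Suc m" by simp
    finally show ?thesis by (simp add: Z_def)
  qed
  have "Suc m * (Suc m * X) = Suc m * (2 * (Suc (2*m) * C))"
  proof -
    have "Suc m * (Suc m * X) = Suc m * (Suc (Suc (2*m)) * Z)" using e1 e3 by simp
    also have "\<dots> = Suc (Suc (2*m)) * (Suc m * Z)" by (simp only: mult.left_commute)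
    also have "\<dots> = Suc (Suc (2*m)) * (Suc (2*m) * C)" by (simp only: e2)
    also have "Suc (Suc (2*m)) = Suc m * 2" by simp
    finally show ?thesis by (simp only: mult.assoc)
  qed
  then have "Suc m * X = 2 * (Suc (2*m) * C)" by (metis Zero_not_Suc mult_left_cancel)
  then have "real (Suc m * X) = real (2 * (Suc (2*m) * C))" by (simp only:)
  then show ?thesis unfolding X_def[symmetric] C_def[symmetric] by (simp add: algebra_simps)
qed

lemma V0_sums: "(\<lambda>j. ca m j / (real j + 1)) sums V0v m"
proof (induction m)
  case 0
  then show ?case using V0_base by (simp add: V0v_def)
next
  case (Suc m)
  have "(\<lambda>j. ca (Suc m) j / (real j + 1)) sums ((real m + 1) / (real m + 3/2) * V0v m)"
    by (rule V0_step[OF Suc.IH])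
  moreover have "(real m + 1) / (real m + 3/2) * V0v m = V0v (Suc m)"
  proof -
    define C where "C = real (2*m choose m)"
    define C' where "C' = real (2 * Suc m choose Suc m)"
    have Cpos: "C > 0" by (simp add: C_def)
    have rel: "(real m + 1) * C' = 2 * (2 * real m + 1) * C"
      using central_binom_Suc[of m] unfolding C_def C'_def .
    have "0 < (2 * Suc m choose Suc m)" by (rule zero_less_binomial) simp
    then have C'pos: "C' > 0" unfolding C'_def by (simp only: of_nat_0_less_iff)
    have pi: "pi > 0" by (rule pi_gt_zero)
    define P where "P = (4::real)^(m+1)"
    have P4: "(4::real)^(Suc m + 1) = 4 * P" by (simp add: P_def)
    have C': "C' = 2 * (2 * real m + 1) * C / (real m + 1)"
      using rel by (simp add: field_simps)
    have d1: "(real m + 3/2) * (pi * C * (2 * real m + 1)) \<noteq> 0" using Cpos pi by simp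
    have d2: "pi * (2 * (2 * real m + 1) * C) * (2 * (real m + 1) + 1) \<noteq> 0" using Cpos pi by simp
    have eqL: "(real m + 1) / (real m + 3/2) * (P / (pi * C * (2 * real m + 1))) = ((real m + 1) * P) / ((real m + 3/2) * (pi * C * (2 * real m + 1)))"
      by simp
    have eqR: "4 * P / (pi * C' * (2 * (real m + 1) + 1)) = (4 * P * (real m + 1)) / (pi * (2 * (2 * real m + 1) * C) * (2 * (real m + 1) + 1))"
      unfolding C' by simp
    have "(real m + 1) / (real m + 3/2) * (P / (pi * C * (2 * real m + 1))) = 4 * P / (pi * C' * (2 * (real m + 1) + 1))"
      unfolding eqL eqR frac_eq_eq[OF d1 d2] by algebra
    then show ?thesis unfolding V0v_def C_def[symmetric] C'_def[symmetric] P_def[symmetric] P4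
      by (simp add: mult.assoc)
  qed
  ultimately show ?case by simp
qed

lemma V0v_pos: "V0v m > 0"
  by (simp add: V0v_def)

lemma tele_alg2:
  fixes J N M c c1 R R1 Rn :: real
  assumes a: "inverse (J + 1) * (J + 1) = 1" "inverse (J + N + 1) * (J + N + 1) = 1"
      "inverse (J + N + 2) * (J + N + 2) = 1" "inverse (2 * N + 1) * (2 * N + 1) = 1"
    and h1: "c1 * ((J + 1) * (J + 1)) = c * ((J + 1/2 - M) * (J + 1/2))"
    and h2: "(J + 1 - N) * R1 * (J + 1 + N) = R * ((J + 1) * (J + 1))"
    and h3: "Rn * (J + 1 + N) = R * (J - N)"
  shows "(N + 3/2 + M) * (c * ((2 * N + 3) * Rn * inverse (J + N + 2))) - (N + 1/2 - M) * (c * ((2 * N + 1) * R * inverse (J + N + 1)))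
     = (- 4 * (N + 1) * inverse (2 * N + 1)) * (J + 1 - N) * (c1 * ((2 * N + 1) * R1 * inverse (J + N + 2)))
       - (- 4 * (N + 1) * inverse (2 * N + 1)) * (J - N) * (c * ((2 * N + 1) * R * inverse (J + N + 1)))"
  using a h1 h2 h3 by algebra

lemma RR_shift: "(real j + 1 - real n) * RR (Suc j) n * (real j + 1 + real n) = RR j n * ((real j + 1) * (real j + 1))"
proof (induction n)
  case 0
  then show ?case by simp
next
  case (Suc n)
  have d1: "real j + 2 + real n \<noteq> 0" "real j + 1 + real n \<noteq> 0" by linarith+
  have "(real j + 1 - real (Suc n)) * RR (Suc j) (Suc n) * (real j + 1 + real (Suc n))
      = (real j - real n) * (RR (Suc j) n * ((real j + 1 - real n) / (real j + 2 + real n))) * (real j + 2 + real n)"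
    by (simp add: RR_Suc algebra_simps)
  also have "\<dots> = (real j - real n) * ((real j + 1 - real n) * RR (Suc j) n)"
    using d1 by (simp add: field_simps)
  also have "(real j + 1 - real n) * RR (Suc j) n = RR j n * ((real j + 1) * (real j + 1)) / (real j + 1 + real n)"
    using Suc.IH d1 by (simp add: field_simps)
  also have "(real j - real n) * (RR j n * ((real j + 1) * (real j + 1)) / (real j + 1 + real n))
      = RR j (Suc n) * ((real j + 1) * (real j + 1))"
    using d1 by (simp add: RR_Suc field_simps)
  finally show ?case .
qed

lemma WW_le: "WW j n \<le> (2 * real n + 1) / (real j + 1)"
proof -
  have "WW j n = (2 * real n + 1) * RR j n / (real j + real n + 1)" by (simp add: WW_def)
  also have "\<dots> \<le> (2 * real n + 1) * 1 / (real j + 1)"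
    using RR_nonneg[of j n] RR_le1[of j n] by (intro frac_le mult_left_mono) auto
  finally show ?thesis by simp
qed

lemma WW_nonneg: "WW j n \<ge> 0"
  using RR_nonneg[of j n] by (simp add: WW_def)

lemma ca_inv_bound:
  obtains C where "C \<ge> 0" "\<And>j. \<bar>ca m j\<bar> \<le> C / (real j + 1)"
proof -
  obtain C where C: "\<And>j. \<bar>ca m j\<bar> \<le> C * (real j + 1) powr (- real m - 1)"
    by (rule ca_bound[of m]) blast
  have "\<bar>ca m j\<bar> \<le> \<bar>C\<bar> / (real j + 1)" for j
  proof -
    have "\<bar>ca m j\<bar> \<le> C * (real j + 1) powr (- real m - 1)" by (rule C)
    also have "\<dots> \<le> \<bar>C\<bar> * (real j + 1) powr (- real m - 1)" by (intro mult_right_mono) auto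
    also have "\<dots> \<le> \<bar>C\<bar> * (1 / (real j + 1))" by (intro mult_left_mono powr_le_inv) auto
    finally show ?thesis by simp
  qed
  then show ?thesis using that[of "\<bar>C\<bar>"] by simp
qed

lemma A_abs_summable: "summable (\<lambda>j. norm (ca m j * WW j n))"
proof -
  obtain C where C0: "C \<ge> 0" and C: "\<And>j. \<bar>ca m j\<bar> \<le> C / (real j + 1)" by (rule ca_inv_bound[of m]) blast
  have s: "summable (\<lambda>j. 1 / (real j + 1)^2)"
    using inverse_squares_sums by (simp add: sums_iff add.commute)
  show ?thesis
  proof (rule summable_comparison_test[OF _ summable_mult[OF s, of "C * (2 * real n + 1)"]])
    show "\<exists>N. \<forall>j\<ge>N. norm (norm (ca m j * WW j n)) \<le> C * (2 * real n + 1) * (1 / (real j + 1)^2)"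
    proof (intro exI allI impI)
      fix j :: nat
      have "norm (norm (ca m j * WW j n)) = \<bar>ca m j\<bar> * WW j n" using WW_nonneg[of j n] by (simp add: abs_mult)
      also have "\<dots> \<le> (C / (real j + 1)) * ((2 * real n + 1) / (real j + 1))"
        using C[of j] WW_le[of j n] WW_nonneg[of j n] C0 by (intro mult_mono) auto
      also have "\<dots> = C * (2 * real n + 1) * (1 / (real j + 1)^2)" by (simp add: power2_eq_square)
      finally show "norm (norm (ca m j * WW j n)) \<le> C * (2 * real n + 1) * (1 / (real j + 1)^2)" .
    qed
  qed
qed

lemma A_summable: "summable (\<lambda>j. ca m j * WW j n)"
  using A_abs_summable by (rule summable_norm_cancel)

lemma Vrec:
  "(real n + 3/2 + real m) * (\<Sum>j. ca m j * WW j (Suc n)) = (real n + 1/2 - real m) * (\<Sum>j. ca m j * WW j n)"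
proof -
  define ka where "ka = - 4 * (real n + 1) * inverse (2 * real n + 1)"
  define H where "H j = ka * (real j - real n) * (ca m j * WW j n)" for j
  have tele: "(real n + 3/2 + real m) * (ca m j * WW j (Suc n)) - (real n + 1/2 - real m) * (ca m j * WW j n) = H (Suc j) - H j" for j
  proof -
    have a: "inverse (real j + 1) * (real j + 1) = 1" "inverse (real j + real n + 1) * (real j + real n + 1) = 1"
      "inverse (real j + real n + 2) * (real j + real n + 2) = 1" "inverse (2 * real n + 1) * (2 * real n + 1) = 1"
      by (auto simp: add_pos_nonneg)
    have h1: "ca m (Suc j) * ((real j + 1) * (real j + 1)) = ca m j * ((real j + 1/2 - real m) * (real j + 1/2))"
    proof -
      have ne: "(real j + 1) * (real j + 1) \<noteq> 0" by simp
      show ?thesis unfolding ca_Suc[of m j] using ne by simp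
    qed
    have h2: "(real j + 1 - real n) * RR (Suc j) n * (real j + 1 + real n) = RR j n * ((real j + 1) * (real j + 1))"
      by (rule RR_shift)
    have h3: "RR j (Suc n) * (real j + 1 + real n) = RR j n * (real j - real n)"
      by (simp add: RR_Suc)
    have W1: "WW j (Suc n) = (2 * real n + 3) * RR j (Suc n) * inverse (real j + real n + 2)"
      by (simp add: WW_def divide_inverse algebra_simps)
    have W2: "WW j n = (2 * real n + 1) * RR j n * inverse (real j + real n + 1)"
      by (simp add: WW_def divide_inverse)
    have W3: "WW (Suc j) n = (2 * real n + 1) * RR (Suc j) n * inverse (real j + real n + 2)"
      by (simp add: WW_def divide_inverse algebra_simps)
    have e: "real (Suc j) - real n = real j + 1 - real n" by simp
    show ?thesis unfolding H_def W1 W2 W3 e ka_def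
      by (rule tele_alg2[OF a h1 h2 h3])
  qed
  obtain C where C0: "C \<ge> 0" and C: "\<And>j. \<bar>ca m j\<bar> \<le> C / (real j + 1)" by (rule ca_inv_bound[of m]) blast
  have Hlim: "H \<longlonglongrightarrow> 0"
  proof (rule Lim_null_comparison)
    show "(\<lambda>j. \<bar>ka\<bar> * (2 * real n + 1) * C / (real j + 1)) \<longlonglongrightarrow> 0" by (rule inv_Suc_tendsto)
    show "\<forall>\<^sub>F j in sequentially. norm (H j) \<le> \<bar>ka\<bar> * (2 * real n + 1) * C / (real j + 1)"
    proof (intro always_eventually allI)
      fix j
      have d: "real j + real n + 1 > 0" by (simp add: add_pos_nonneg)
      have "\<bar>real j - real n\<bar> * WW j n \<le> (real j + real n + 1) * ((2 * real n + 1) / (real j + real n + 1))"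
      proof (intro mult_mono)
        show "\<bar>real j - real n\<bar> \<le> real j + real n + 1" by linarith
        show "WW j n \<le> (2 * real n + 1) / (real j + real n + 1)"
          unfolding WW_def using RR_le1[of j n] d by (intro divide_right_mono) auto
      qed (use WW_nonneg in auto)
      also have "\<dots> = 2 * real n + 1" using d by simp
      finally have b: "\<bar>real j - real n\<bar> * WW j n \<le> 2 * real n + 1" .
      have "norm (H j) = \<bar>ka\<bar> * (\<bar>real j - real n\<bar> * WW j n) * \<bar>ca m j\<bar>"
        using WW_nonneg[of j n] by (simp add: H_def abs_mult)
      also have "\<dots> \<le> \<bar>ka\<bar> * (2 * real n + 1) * (C / (real j + 1))"
        using b C[of j] by (intro mult_mono mult_left_mono) auto
      finally show "norm (H j) \<le> \<bar>ka\<bar> * (2 * real n + 1) * C / (real j + 1)" by simp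
    qed
  qed
  have H0: "H 0 = 0"
  proof (cases n)
    case 0 then show ?thesis by (simp add: H_def)
  next
    case (Suc n') then show ?thesis by (simp add: H_def WW_def RR_zero)
  qed
  have "(\<lambda>j. H (Suc j) - H j) sums (0 - H 0)" by (rule telescope_sums[OF Hlim])
  moreover have "(\<lambda>j. H (Suc j) - H j) = (\<lambda>j. (real n + 3/2 + real m) * (ca m j * WW j (Suc n)) - (real n + 1/2 - real m) * (ca m j * WW j n))"
    using tele by simp
  ultimately have s1: "(\<lambda>j. (real n + 3/2 + real m) * (ca m j * WW j (Suc n)) - (real n + 1/2 - real m) * (ca m j * WW j n)) sums 0"
    using H0 by simp
  have s2: "(\<lambda>j. (real n + 3/2 + real m) * (ca m j * WW j (Suc n)) - (real n + 1/2 - real m) * (ca m j * WW j n))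
      sums ((real n + 3/2 + real m) * (\<Sum>j. ca m j * WW j (Suc n)) - (real n + 1/2 - real m) * (\<Sum>j. ca m j * WW j n))"
    by (intro sums_diff sums_mult summable_sums A_summable)
  from sums_unique2[OF s1 s2] show ?thesis by simp
qed

lemma Vn_sums: "(\<lambda>j. ca m j * WW j n) sums (uu m n * V0v m)"
proof (induction n)
  case 0
  have "(\<lambda>j. ca m j * WW j 0) = (\<lambda>j. ca m j / (real j + 1))"
    by (simp add: WW_def add_ac)
  then show ?case using V0_sums[of m] by (simp add: uu_def)
next
  case (Suc n)
  have S: "(\<Sum>j. ca m j * WW j n) = uu m n * V0v m" using Suc.IH by (simp add: sums_iff)
  have pos: "real n + 3/2 + real m > 0" by simp
  have "(\<Sum>j. ca m j * WW j (Suc n)) = (real n + 1/2 - real m) / (real n + 3/2 + real m) * (uu m n * V0v m)"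
    using Vrec[of n m] S pos by (simp add: field_simps)
  also have "\<dots> = uu m (Suc n) * V0v m"
  proof -
    have p: "pochhammer (3/2 + real m) n > 0" by (intro pochhammer_pos) simp
    have "uu m (Suc n) = uu m n * ((1/2 - real m + real n) / (3/2 + real m + real n))"
      unfolding uu_def pochhammer_Suc using p pos by (simp add: field_simps)
    then show ?thesis by (simp add: algebra_simps)
  qed
  finally show ?case using A_summable[of m "Suc n"] by (simp add: sums_iff)
qed

lemma F_bound:
  assumes x: "x > -1" and Cc: "Cc \<ge> 0" "\<bar>ca m j\<bar> \<le> Cc / (real j + 1)"
    and Cp: "\<bar>ph x n\<bar> \<le> Cp * (real n + 1) powr (- 2 * (x + 1))"
    and th: "0 < th" "th \<le> 1"
  shows "\<bar>ca m j * ((-1)^n * WW j n * ph x n)\<bar> \<le> 2 * Cc * \<bar>Cp\<bar> * 8 powr th * ((real j + 1) powr (th - 2) * (real n + 1) powr (1 - 2 * th - 2 * (x + 1)))"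
proof -
  define y where "y = real j + 1"
  define z where "z = real n + 1"
  have y: "y > 0" and z: "z > 0" by (auto simp: y_def z_def)
  have z2: "(z^2) powr th = z powr (2 * th)"
  proof -
    have e: "z^2 = z powr 2" using z by (simp add: powr_numeral)
    show ?thesis unfolding e powr_powr by simp
  qed
  have RRb: "RR j n \<le> 8 powr th * (y powr th / z powr (2 * th))"
  proof -
    have "RR j n \<le> (8 * y / z^2) powr th" using RR_powr[OF th, of j n] by (simp add: y_def z_def)
    also have "\<dots> = 8 powr th * (y powr th / z powr (2 * th))"
      using y z by (simp add: powr_divide powr_mult z2)
    finally show ?thesis .
  qed
  have Wb: "WW j n \<le> (2 * z) * (8 powr th * (y powr th / z powr (2 * th))) / y"
  proof -
    have "WW j n = (2 * real n + 1) * RR j n / (real j + real n + 1)" by (simp add: WW_def)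
    also have "\<dots> \<le> (2 * real n + 1) * RR j n / y"
      using RR_nonneg[of j n] y by (intro divide_left_mono) (auto simp: y_def)
    also have "\<dots> \<le> (2 * z) * (8 powr th * (y powr th / z powr (2 * th))) / y"
      using RRb RR_nonneg[of j n] y by (intro divide_right_mono mult_mono) (auto simp: z_def)
    finally show ?thesis .
  qed
  have Cp': "\<bar>ph x n\<bar> \<le> \<bar>Cp\<bar> * z powr (- 2 * (x + 1))"
    using Cp by (simp add: z_def) (smt (verit) mult_right_mono powr_ge_zero)
  have "\<bar>ca m j * ((-1)^n * WW j n * ph x n)\<bar> = \<bar>ca m j\<bar> * WW j n * \<bar>ph x n\<bar>"
    using WW_nonneg[of j n] by (simp add: abs_mult power_abs)
  also have "\<dots> \<le> (Cc / y) * ((2 * z) * (8 powr th * (y powr th / z powr (2 * th))) / y) * (\<bar>Cp\<bar> * z powr (- 2 * (x + 1)))"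
    using Cc Wb Cp' WW_nonneg[of j n] y z by (intro mult_mono) (auto simp: y_def)
  also have "\<dots> = 2 * Cc * \<bar>Cp\<bar> * 8 powr th * ((y powr th / (y * y)) * (z * z powr (- 2 * (x + 1)) / z powr (2 * th)))"
    using y z by (simp add: field_simps)
  also have "y powr th / (y * y) = y powr (th - 2)"
    using y by (simp add: powr_diff powr_numeral power2_eq_square)
  also have "z * z powr (- 2 * (x + 1)) / z powr (2 * th) = z powr (1 - 2 * th - 2 * (x + 1))"
  proof -
    have "z powr (1 - 2 * th - 2 * (x + 1)) = z powr (1 + (- 2 * (x + 1)) - 2 * th)" by (simp add: algebra_simps)
    also have "\<dots> = z powr 1 * z powr (- 2 * (x + 1)) / z powr (2 * th)" by (simp only: powr_diff powr_add)
    finally show ?thesis using z by simp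
  qed
  finally show ?thesis by (simp add: y_def z_def)
qed

lemma summable_powr_shift:
  assumes "e < -1"
  shows "summable (\<lambda>j::nat. (real j + 1) powr e)"
proof -
  have "summable (\<lambda>j::nat. real j powr e)" using assms by (simp add: summable_real_powr_iff)
  then have "summable (\<lambda>j::nat. real (Suc j) powr e)" by (subst summable_Suc_iff)
  then show ?thesis by (simp add: add.commute)
qed

lemma main_sums:
  assumes x: "x > -1"
  obtains I where "(\<lambda>j. ca m j / (x + real j + 1)) sums I"
    "(\<lambda>n. (-1)^n * uu m n * ph x n) sums (I / V0v m)"
proof -
  obtain Cc where Cc0: "Cc \<ge> 0" and Cc: "\<And>j. \<bar>ca m j\<bar> \<le> Cc / (real j + 1)"
    by (rule ca_inv_bound[of m]) blast
  obtain Cp where Cp: "\<And>n. \<bar>ph x n\<bar> \<le> Cp * (real n + 1) powr (- 2 * (x + 1))"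
    using ph_bound[OF x] by blast
  define th where "th = 1 - min (x + 1) 1 / 2"
  have th: "0 < th" "th \<le> 1" "th < 1" using x by (auto simp: th_def)
  define K where "K = 2 * Cc * \<bar>Cp\<bar> * 8 powr th"
  have K0: "K \<ge> 0" using Cc0 by (simp add: K_def)
  define a where "a j = (real j + 1) powr (th - 2)" for j :: nat
  define b where "b n = (real n + 1) powr (1 - 2 * th - 2 * (x + 1))" for n :: nat
  have asum: "summable a" unfolding a_def using th by (intro summable_powr_shift) auto
  have bsum: "summable b" unfolding b_def using x by (intro summable_powr_shift) (auto simp: th_def)
  have a0: "a j \<ge> 0" for j by (simp add: a_def)
  have b0: "b n \<ge> 0" for n by (simp add: b_def)
  define G where "G = (\<lambda>(j, n). K * a j * b n)"
  have Gsum: "G summable_on (Sigma UNIV (\<lambda>_. UNIV))"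
  proof (rule summable_on_SigmaI[where g = "\<lambda>j. K * a j * suminf b"])
    fix j :: nat
    have "(b has_sum suminf b) UNIV" using bsum b0 by (intro sums_nonneg_imp_has_sum summable_sums) auto
    then have "((\<lambda>n. (K * a j) * b n) has_sum ((K * a j) * suminf b)) UNIV" by (rule has_sum_cmult_right)
    then show "((\<lambda>n. G (j, n)) has_sum K * a j * suminf b) UNIV" by (simp add: G_def)
  next
    have "summable (\<lambda>j. (K * suminf b) * a j)" using asum by (rule summable_mult)
    moreover have "\<And>j. (K * suminf b) * a j \<ge> 0" using K0 a0 b0 bsum by (simp add: suminf_nonneg)
    ultimately have "(\<lambda>j. (K * suminf b) * a j) summable_on UNIV"
      by (simp add: summable_on_UNIV_nonneg_real_iff)
    then show "(\<lambda>j. K * a j * suminf b) summable_on UNIV" by (simp add: mult_ac)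
  next
    fix j n :: nat
    show "G (j, n) \<ge> 0" using K0 a0 b0 by (simp add: G_def)
  qed
  define F where "F = (\<lambda>(j, n). ca m j * ((-1)^n * WW j n * ph x n))"
  have Fb: "norm (F p) \<le> G p" for p
  proof -
    obtain j n where p: "p = (j, n)" by (cases p)
    have "\<bar>ca m j * ((-1)^n * WW j n * ph x n)\<bar> \<le> K * (a j * b n)"
      unfolding K_def a_def b_def by (rule F_bound[OF x Cc0 Cc Cp th(1,2)])
    then show ?thesis by (simp add: p F_def G_def mult_ac)
  qed
  have "(\<lambda>p. norm (F p)) summable_on (Sigma UNIV (\<lambda>_. UNIV))"
    by (rule Infinite_Sum.abs_summable_on_comparison_test'[OF Gsum]) (use Fb in auto)
  then have Fsum: "F summable_on (Sigma UNIV (\<lambda>_. UNIV))"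
    using summable_on_iff_abs_summable_on_real[of F] by blast
  define I where "I = infsum F (Sigma UNIV (\<lambda>_. UNIV))"
  have FI: "(F has_sum I) (Sigma UNIV (\<lambda>_. UNIV))" using Fsum unfolding I_def by (rule has_sum_infsum)
  have fibJ: "((\<lambda>n. F (j, n)) has_sum (ca m j / (x + real j + 1))) UNIV" for j
  proof (rule has_sum_finite_neutralI[where B = "{..<Suc j}"])
    show "finite {..<Suc j}" by simp
    show "{..<Suc j} \<subseteq> UNIV" by simp
    show "F (j, n) = 0" if "n \<in> UNIV - {..<Suc j}" for n
      using that by (simp add: F_def WW_def RR_zero)
    have "(\<Sum>n<Suc j. F (j, n)) = ca m j * (\<Sum>n<Suc j. (-1)^n * WW j n * ph x n)"
      by (simp only: F_def case_prod_conv sum_distrib_left)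
    also have "\<dots> = ca m j / (x + real j + 1)" using finite_id[OF x, of j] by simp
    finally show "ca m j / (x + real j + 1) = (\<Sum>n<Suc j. F (j, n))" by simp
  qed
  have s1: "((\<lambda>j. ca m j / (x + real j + 1)) has_sum I) UNIV"
    by (rule has_sum_SigmaD[OF FI]) (use fibJ in auto)
  have fibN: "((\<lambda>j. F (j, n)) has_sum ((-1)^n * ph x n * (uu m n * V0v m))) UNIV" for n
  proof -
    have "((\<lambda>j. ca m j * WW j n) has_sum (uu m n * V0v m)) UNIV"
      by (rule norm_summable_imp_has_sum[OF A_abs_summable Vn_sums])
    then have "((\<lambda>j. ((-1)^n * ph x n) * (ca m j * WW j n)) has_sum ((-1)^n * ph x n * (uu m n * V0v m))) UNIV"
      by (rule has_sum_cmult_right)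
    then show ?thesis by (simp add: F_def mult_ac)
  qed
  have FI': "((\<lambda>(n, j). F (j, n)) has_sum I) (Sigma UNIV (\<lambda>_. UNIV))"
    using has_sum_swap[where f=F and S=I and A=UNIV and B=UNIV] FI by blast
  have s2: "((\<lambda>n. (-1)^n * ph x n * (uu m n * V0v m)) has_sum I) UNIV"
    by (rule has_sum_SigmaD[OF FI']) (use fibN in auto)
  have r1: "(\<lambda>j. ca m j / (x + real j + 1)) sums I" using s1 by (rule has_sum_imp_sums)
  have "(\<lambda>n. (-1)^n * ph x n * (uu m n * V0v m)) sums I" using s2 by (rule has_sum_imp_sums)
  then have "(\<lambda>n. (-1)^n * ph x n * (uu m n * V0v m) / V0v m) sums (I / V0v m)" by (rule sums_divide)
  moreover have "(\<lambda>n. (-1)^n * ph x n * (uu m n * V0v m) / V0v m) = (\<lambda>n. (-1)^n * uu m n * ph x n)"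
    using V0v_pos[of m] by (simp add: fun_eq_iff)
  ultimately have r2: "(\<lambda>n. (-1)^n * uu m n * ph x n) sums (I / V0v m)" by simp
  show ?thesis using that r1 r2 by blast
qed

lemma S_summable:
  assumes x: "x > -1"
  shows "summable (\<lambda>j. ca m j / (x + real j + 1))"
proof -
  obtain I where "(\<lambda>j. ca m j / (x + real j + 1)) sums I" by (rule main_sums[OF x, of m])
  then show ?thesis by (rule sums_summable)
qed

lemma V0v_Suc: "(real m + 3/2) * V0v (Suc m) = (real m + 1) * V0v m"
proof -
  have "(\<lambda>j. ca (Suc m) j / (real j + 1)) sums ((real m + 1) / (real m + 3/2) * V0v m)"
    by (rule V0_step[OF V0_sums])
  then have "V0v (Suc m) = (real m + 1) / (real m + 3/2) * V0v m"
    using V0_sums[of "Suc m"] by (simp add: sums_iff)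
  then show ?thesis by (simp add: field_simps)
qed

lemma S_rel:
  assumes x: "x > -1"
  shows "(\<lambda>j. ca (Suc m) j) sums ((x + real m + 3/2) * (\<Sum>j. ca (Suc m) j / (x + real j + 1)) - (real m + 1/2) * (\<Sum>j. ca m j / (x + real j + 1)))"
proof -
  have t: "(x + real m + 3/2) * (ca (Suc m) j / (x + real j + 1)) - (real m + 1/2) * (ca m j / (x + real j + 1)) = ca (Suc m) j" for j
  proof -
    have d: "x + real j + 1 > 0" using x by simp
    have a: "inverse (x + real j + 1) * (x + real j + 1) = 1" using d by simp
    have h: "ca (Suc m) j * (real j - 1/2 - real m) = (- 1/2 - real m) * ca m j" by (rule ca_m_Suc)
    show ?thesis unfolding divide_inverse using a h by algebra
  qed
  have "(\<lambda>j. (x + real m + 3/2) * (ca (Suc m) j / (x + real j + 1)) - (real m + 1/2) * (ca m j / (x + real j + 1)))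
    sums ((x + real m + 3/2) * (\<Sum>j. ca (Suc m) j / (x + real j + 1)) - (real m + 1/2) * (\<Sum>j. ca m j / (x + real j + 1)))"
    by (intro sums_diff sums_mult summable_sums S_summable x)
  then show ?thesis unfolding t .
qed

lemma S_pos:
  assumes x: "x > -1"
  shows "(\<Sum>j. ca m j / (x + real j + 1)) > 0"
proof (induction m)
  case 0
  have "summable (\<lambda>j. ca 0 j / (x + real j + 1))" by (rule S_summable[OF x])
  moreover have "ca 0 j / (x + real j + 1) > 0" for j
  proof -
    have d: "x + real j + 1 > 0" using x by simp
    show ?thesis using ca_0_pos[of j] d by simp
  qed
  ultimately show ?case by (rule suminf_pos)
next
  case (Suc m)
  have x0: "(0::real) > -1" by simp
  have e0: "\<And>n. (\<Sum>j. ca n j / (real j + 1)) = V0v n" using V0_sums by (simp add: sums_iff)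
  have "(x + real m + 3/2) * (\<Sum>j. ca (Suc m) j / (x + real j + 1)) - (real m + 1/2) * (\<Sum>j. ca m j / (x + real j + 1))
      = (0 + real m + 3/2) * (\<Sum>j. ca (Suc m) j / (0 + real j + 1)) - (real m + 1/2) * (\<Sum>j. ca m j / (0 + real j + 1))"
    using sums_unique2[OF S_rel[OF x, of m] S_rel[OF x0, of m]] .
  also have "\<dots> = (real m + 3/2) * V0v (Suc m) - (real m + 1/2) * V0v m" by (simp add: e0)
  also have "\<dots> = V0v m / 2" using V0v_Suc[of m] by (simp add: algebra_simps)
  finally have eq: "(x + real m + 3/2) * (\<Sum>j. ca (Suc m) j / (x + real j + 1)) = (real m + 1/2) * (\<Sum>j. ca m j / (x + real j + 1)) + V0v m / 2"
    by simp
  have "(real m + 1/2) * (\<Sum>j. ca m j / (x + real j + 1)) + V0v m / 2 > 0"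
  proof (rule add_pos_pos)
    show "(real m + 1/2) * (\<Sum>j. ca m j / (x + real j + 1)) > 0"
      by (rule mult_pos_pos) (simp, rule Suc.IH)
    show "V0v m / 2 > 0" using V0v_pos[of m] by simp
  qed
  then have "(x + real m + 3/2) * (\<Sum>j. ca (Suc m) j / (x + real j + 1)) > 0" using eq by simp
  moreover have "x + real m + 3/2 > 0" using x by simp
  ultimately show ?case by (simp add: zero_less_mult_iff)
qed

theorem mainTheorem17:
  fixes m :: nat and \<eta> :: real
  assumes "\<eta> > -1"
  shows "pi = 4 ^ (m + 1) / (real (2 * m choose m) * (2 * real m + 1)) *
    (hyperpFq [1/2 - real m, 1, - \<eta>] [3/2 + real m, 2 + \<eta>] (-1)
     / hyperpFq [1/2 - real m, 1/2, 1 + \<eta>] [1, 2 + \<eta>] 1)"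
proof -
  have x: "\<eta> > -1" by (rule assms)
  obtain I where sI: "(\<lambda>j. ca m j / (\<eta> + real j + 1)) sums I"
    and sT: "(\<lambda>n. (-1)^n * uu m n * ph \<eta> n) sums (I / V0v m)"
    by (rule main_sums[OF x, of m])
  have Ipos: "I > 0" using S_pos[OF x, of m] sI by (simp add: sums_iff)
  have e1: "1 + \<eta> > 0" using x by simp
  have Dt: "prod_list (map (\<lambda>a. pochhammer a n) [1/2 - real m, 1/2, 1 + \<eta>])
           / prod_list (map (\<lambda>b. pochhammer b n) [1, 2 + \<eta>]) * 1 ^ n / fact n
         = (1 + \<eta>) * (ca m n / (\<eta> + real n + 1))" for n
  proof -
    have P2: "pochhammer (2 + \<eta>) n > 0" using x by (intro pochhammer_pos) simp
    have rel: "pochhammer (1 + \<eta>) n * (1 + \<eta> + real n) = (1 + \<eta>) * pochhammer (2 + \<eta>) n"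
      using pochhammer_rec[of "1 + \<eta>" n] pochhammer_Suc[of "1 + \<eta>" n] by (simp add: add_ac)
    have d: "\<eta> + real n + 1 > 0" using x by simp
    have a: "inverse (pochhammer (2 + \<eta>) n) * pochhammer (2 + \<eta>) n = 1"
      "inverse (fact n :: real) * fact n = 1" "inverse (\<eta> + real n + 1) * (\<eta> + real n + 1) = 1"
      using P2 d by auto
    have f1: "pochhammer (1::real) n = fact n" by (simp add: pochhammer_fact)
    show ?thesis unfolding list.map prod_list.Cons prod_list.Nil mult_1_right f1 ca_def divide_inverse power2_eq_square inverse_mult_distrib power_one
      using a rel by algebra
  qed
  have Nt: "prod_list (map (\<lambda>a. pochhammer a n) [1/2 - real m, 1, - \<eta>])
           / prod_list (map (\<lambda>b. pochhammer b n) [3/2 + real m, 2 + \<eta>]) * (-1) ^ n / fact n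
         = (1 + \<eta>) * ((-1)^n * uu m n * ph \<eta> n)" for n
  proof -
    have P2: "pochhammer (2 + \<eta>) n > 0" using x by (intro pochhammer_pos) simp
    have P3: "pochhammer (3/2 + real m) n > 0" by (intro pochhammer_pos) simp
    have rel: "pochhammer (1 + \<eta>) (Suc n) = (1 + \<eta>) * pochhammer (2 + \<eta>) n"
      using pochhammer_rec[of "1 + \<eta>" n] by (simp add: add_ac)
    have a: "inverse (pochhammer (2 + \<eta>) n) * pochhammer (2 + \<eta>) n = 1"
      "inverse (fact n :: real) * fact n = 1" "inverse (1 + \<eta>) * (1 + \<eta>) = 1"
      "inverse (pochhammer (3/2 + real m) n) * pochhammer (3/2 + real m) n = 1"
      using P2 P3 e1 by auto
    have f1: "pochhammer (1::real) n = fact n" by (simp add: pochhammer_fact)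
    define Q where "Q = pochhammer (3/2 + real m) n"
    define A where "A = pochhammer (1/2 - real m) n"
    have aQ: "inverse Q * Q = 1" using a(4) by (simp add: Q_def)
    define sg where "sg = ((-1::real)^n)"
    show ?thesis unfolding list.map prod_list.Cons prod_list.Nil mult_1_right uu_def ph_def rel f1
      unfolding Q_def[symmetric] A_def[symmetric] sg_def[symmetric]
      unfolding divide_inverse inverse_mult_distrib
      using a(1-3) aQ by algebra
  qed
  have D: "hyperpFq [1/2 - real m, 1/2, 1 + \<eta>] [1, 2 + \<eta>] 1 = (1 + \<eta>) * I"
    unfolding hyperpFq_def Dt using sums_mult[OF sI, of "1 + \<eta>"] by (simp add: sums_iff)
  have N: "hyperpFq [1/2 - real m, 1, - \<eta>] [3/2 + real m, 2 + \<eta>] (-1) = (1 + \<eta>) * (I / V0v m)"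
    unfolding hyperpFq_def Nt using sums_mult[OF sT, of "1 + \<eta>"] by (simp add: sums_iff)
  have C: "real (2 * m choose m) > 0" by simp
  define A where "A = (4::real) ^ (m + 1)"
  define Cb where "Cb = real (2 * m choose m)"
  define B where "B = 2 * real m + 1"
  define E where "E = 1 + \<eta>"
  have a: "inverse A * A = 1" "inverse Cb * Cb = 1" "inverse B * B = 1" "inverse E * E = 1"
    "inverse I * I = 1" "inverse pi * pi = 1"
    using Ipos e1 C pi_gt_zero by (auto simp: A_def Cb_def B_def E_def)
  show ?thesis unfolding N D unfolding V0v_def A_def[symmetric] Cb_def[symmetric] B_def[symmetric] E_def[symmetric]
    unfolding divide_inverse inverse_mult_distrib inverse_inverse_eq
    using a by algebra
qed


end
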